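(* For an integer $n\geq 0$ and $z\in\mathbb{C}$, let $$\mathcal{T}_n(z) := \sum_{m=0}^n \binom{n}{m} m^m\,(n-m+z)^{n-m}$$ (with $0^0\equiv 1$). Then $$\mathcal{T}_n(z) = \sum_{k=0}^n a_k\, (z+ n +1)^k, \qquad a_k = \binom{n}{k}\,\mathcal{T}_{n-k}(k-n-1) = \binom{n}{k}\, d_{n-k},$$ where $d_j := \mathcal{T}_j(-j-1)$ for integers $j\geq 0$.
   Context: Convention: $0^0\equiv1$. The numbers $d_j=\mathcal{T}_j(-j-1)$ are the values of $\mathcal{T}_j$ at $-j-1$. *)

theory Defs
  imports Complex_Main
begin

text \<open>T_n(z) = sum_{m=0}^n (n choose m) m^m (n-m+z)^(n-m); note 0^0 = 1 in Isabelle.\<close>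
definition T :: "nat \<Rightarrow> complex \<Rightarrow> complex" where
  "T n z = (\<Sum>m=0..n. of_nat (n choose m) * of_nat m ^ m * (of_nat (n - m) + z) ^ (n - m))"

definition d :: "nat \<Rightarrow> complex" where
  "d j = T j (- of_nat j - 1)"

end

theory Submission
  imports Defs
begin

lemma chm: "(n choose m) * (n - m choose k) = (n choose k) * (n - k choose m)"
proof (cases "m + k \<le> n")
  case True
  have "(n choose (n - m)) * ((n - m) choose k) = (n choose k) * (n - k choose (n - m - k))"
    using True by (intro choose_mult) auto
  moreover have "n choose (n - m) = n choose m" using True by (simp add: binomial_symmetric[symmetric])
  moreover have "n - k choose (n - m - k) = n - k choose m"
    using True binomial_symmetric[of m "n - k"] by (simp add: diff_commute add.commute)
  ultimately show ?thesis by simp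
next
  case False
  have l: "(n choose m) * (n - m choose k) = 0"
  proof (cases "m \<le> n")
    case True then have "n - m < k" using False by arith
    then show ?thesis by simp
  qed simp
  have r: "(n choose k) * (n - k choose m) = 0"
  proof (cases "k \<le> n")
    case True then have "n - k < m" using False by arith
    then show ?thesis by simp
  qed simp
  show ?thesis by (simp only: l r)
qed

lemma shiftT: "T n (w + y) = (\<Sum>k=0..n. of_nat (n choose k) * T (n - k) (w + of_nat k) * y ^ k)"
proof -
  define g where "g m k = of_nat ((n choose m) * (n - m choose k)) * of_nat m ^ m * y ^ k
      * (of_nat (n - m) + w) ^ (n - m - k)" for m k
  have "T n (w + y) = (\<Sum>m=0..n. \<Sum>k=0..n. g m k)"
    unfolding T_def
  proof (rule sum.cong[OF refl])
    fix m assume m: "m \<in> {0..n}"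
    have "(of_nat (n - m) + (w + y)) ^ (n - m) = (y + (of_nat (n - m) + w)) ^ (n - m)"
      by (simp add: algebra_simps)
    also have "\<dots> = (\<Sum>k\<le>n-m. of_nat (n - m choose k) * y ^ k * (of_nat (n - m) + w) ^ (n - m - k))"
      by (rule binomial_ring)
    also have "\<dots> = (\<Sum>k=0..n. of_nat (n - m choose k) * y ^ k * (of_nat (n - m) + w) ^ (n - m - k))"
      by (rule sum.mono_neutral_left) auto
    finally show "of_nat (n choose m) * of_nat m ^ m * (of_nat (n - m) + (w + y)) ^ (n - m)
        = (\<Sum>k=0..n. g m k)"
      by (simp add: g_def sum_distrib_left mult_ac)
  qed
  also have "\<dots> = (\<Sum>k=0..n. \<Sum>m=0..n. g m k)" by (rule sum.swap)
  also have "\<dots> = (\<Sum>k=0..n. of_nat (n choose k) * T (n - k) (w + of_nat k) * y ^ k)"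
  proof (rule sum.cong[OF refl])
    fix k assume k: "k \<in> {0..n}"
    have "(\<Sum>m=0..n. g m k) = (\<Sum>m=0..n-k. g m k)"
    proof (rule sum.mono_neutral_right)
      show "\<forall>i\<in>{0..n} - {0..n - k}. g i k = 0"
        by (auto simp: g_def chm)
    qed auto
    also have "\<dots> = (\<Sum>m=0..n-k. of_nat (n choose k) * y ^ k * (of_nat (n - k choose m) *
        of_nat m ^ m * (of_nat (n - k - m) + (w + of_nat k)) ^ (n - k - m)))"
    proof (rule sum.cong[OF refl])
      fix m assume m: "m \<in> {0..n-k}"
      have e1: "(of_nat (n - m) + w :: complex) = of_nat (n - k - m) + (w + of_nat k)"
        using m k by (simp add: of_nat_diff)
      have e2: "n - m - k = n - k - m" by simp
      show "g m k = of_nat (n choose k) * y ^ k * (of_nat (n - k choose m) *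
        of_nat m ^ m * (of_nat (n - k - m) + (w + of_nat k)) ^ (n - k - m))"
        unfolding g_def chm e1 e2 by (simp add: mult_ac)
    qed
    also have "\<dots> = of_nat (n choose k) * T (n - k) (w + of_nat k) * y ^ k"
      unfolding T_def by (simp add: sum_distrib_left mult_ac)
    finally show "(\<Sum>m=0..n. g m k) = of_nat (n choose k) * T (n - k) (w + of_nat k) * y ^ k" .
  qed
  finally show ?thesis .
qed

theorem proposition4:
  fixes n :: nat and z :: complex
  shows "T n z = (\<Sum>k=0..n. of_nat (n choose k) * T (n - k) (of_int (int k - int n - 1)) * (z + of_nat n + 1) ^ k)
    \<and> (\<forall>k\<in>{0..n}. of_nat (n choose k) * T (n - k) (of_int (int k - int n - 1)) = of_nat (n choose k) * d (n - k))"
proof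
  have "T n z = T n ((- of_nat n - 1) + (z + of_nat n + 1))" by (simp add: algebra_simps)
  also have "\<dots> = (\<Sum>k=0..n. of_nat (n choose k) * T (n - k) ((- of_nat n - 1) + of_nat k) * (z + of_nat n + 1) ^ k)"
    by (rule shiftT)
  also have "\<dots> = (\<Sum>k=0..n. of_nat (n choose k) * T (n - k) (of_int (int k - int n - 1)) * (z + of_nat n + 1) ^ k)"
    by (rule sum.cong[OF refl]) (simp add: algebra_simps)
  finally show "T n z = (\<Sum>k=0..n. of_nat (n choose k) * T (n - k) (of_int (int k - int n - 1)) * (z + of_nat n + 1) ^ k)" .
next
  show "\<forall>k\<in>{0..n}. of_nat (n choose k) * T (n - k) (of_int (int k - int n - 1)) = of_nat (n choose k) * d (n - k)"
  proof
    fix k assume k: "k \<in> {0..n}"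
    have "(of_int (int k - int n - 1) :: complex) = - of_nat (n - k) - 1"
      using k by (simp add: of_nat_diff)
    then show "of_nat (n choose k) * T (n - k) (of_int (int k - int n - 1)) = of_nat (n choose k) * d (n - k)"
      by (simp add: d_def)
  qed
qed

end
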